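(* Let $G_c^w$ be an edge-coloured edge-weighted multi-graph (half-edge colouring $c$, edge weights $w$) which is g-GHZ. Then there is a weight function $w'$ on the edges such that $G_c^{w'}$ (same multi-graph, same half-edge colouring) is a GHZ graph with the same dimension as $G_c^w$.
   Context: Multi-graphs have no self-loops. Each edge $e$ between $u$ and $v$ consists of two half-edges $e_u$ and $e_v$. A half-edge colouring is a function $c$ from the set of half-edges to $\mathbb{N}_0$; each edge $e$ also gets a weight $w(e)\in\mathbb{C}$. The weight of a perfect matching $P$ is $\prod_{e\in P}w(e)$. A vertex colouring is a map $vc:V\to\mathbb{N}_0$; it filters out the subgraph consisting of all edges $e$ (between $u,v$) with $c(e_u)=vc(u)$ and $c(e_v)=vc(v)$ (with the same weights). The weight of $vc$ is the sum of the weights of all perfect matchings of this filtered subgraph; $vc$ is feasible if the filtered subgraph has at least one perfect matching (an infeasible colouring has weight $0$). The graph is GHZ if every feasible monochromatic vertex colouring has weight $1$ and every non-monochromatic vertex colouring has weight $0$. It is g-GHZ if every feasible monochromatic vertex colouring has non-zero weight and every non-monochromatic vertex colouring has weight $0$. In both cases the dimension is the number of feasible monochromatic vertex colourings. *)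

theory Defs
  imports Complex_Main "HOL-Library.FuncSet"
begin

text \<open>A multi-graph: finite vertex set V, finite edge set E (edges are elements of a
type 'e, so parallel edges are allowed), each edge e joining end1 e and end2 e.
The two half-edges of e are (e, end1 e) and (e, end2 e). A half-edge colouring is
c :: 'e => 'v => nat, the colour of half-edge (e,v) being c e v.\<close>

definition multigraph :: "'v set \<Rightarrow> 'e set \<Rightarrow> ('e \<Rightarrow> 'v) \<Rightarrow> ('e \<Rightarrow> 'v) \<Rightarrow> bool" where
  "multigraph V E end1 end2 \<longleftrightarrow> finite V \<and> finite E \<and>
     (\<forall>e\<in>E. end1 e \<in> V \<and> end2 e \<in> V \<and> end1 e \<noteq> end2 e)"

definition perfect_matchings :: "'v set \<Rightarrow> 'e set \<Rightarrow> ('e \<Rightarrow> 'v) \<Rightarrow> ('e \<Rightarrow> 'v) \<Rightarrow> 'e set set" where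
  "perfect_matchings V F end1 end2 =
     {M. M \<subseteq> F \<and> (\<forall>v\<in>V. \<exists>!e. e \<in> M \<and> (v = end1 e \<or> v = end2 e))}"

definition filtered_edges :: "'e set \<Rightarrow> ('e \<Rightarrow> 'v) \<Rightarrow> ('e \<Rightarrow> 'v) \<Rightarrow> ('e \<Rightarrow> 'v \<Rightarrow> nat) \<Rightarrow> ('v \<Rightarrow> nat) \<Rightarrow> 'e set" where
  "filtered_edges E end1 end2 c vc =
     {e \<in> E. c e (end1 e) = vc (end1 e) \<and> c e (end2 e) = vc (end2 e)}"

definition vc_weight :: "'v set \<Rightarrow> 'e set \<Rightarrow> ('e \<Rightarrow> 'v) \<Rightarrow> ('e \<Rightarrow> 'v) \<Rightarrow> ('e \<Rightarrow> 'v \<Rightarrow> nat)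
    \<Rightarrow> ('e \<Rightarrow> complex) \<Rightarrow> ('v \<Rightarrow> nat) \<Rightarrow> complex" where
  "vc_weight V E end1 end2 c w vc =
     (\<Sum>M\<in>perfect_matchings V (filtered_edges E end1 end2 c vc) end1 end2. \<Prod>e\<in>M. w e)"

definition feasible :: "'v set \<Rightarrow> 'e set \<Rightarrow> ('e \<Rightarrow> 'v) \<Rightarrow> ('e \<Rightarrow> 'v) \<Rightarrow> ('e \<Rightarrow> 'v \<Rightarrow> nat)
    \<Rightarrow> ('v \<Rightarrow> nat) \<Rightarrow> bool" where
  "feasible V E end1 end2 c vc \<longleftrightarrow>
     perfect_matchings V (filtered_edges E end1 end2 c vc) end1 end2 \<noteq> {}"

definition vertex_colourings :: "'v set \<Rightarrow> ('v \<Rightarrow> nat) set" where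
  "vertex_colourings V = V \<rightarrow>\<^sub>E UNIV"

definition monochromatic :: "'v set \<Rightarrow> ('v \<Rightarrow> nat) \<Rightarrow> bool" where
  "monochromatic V vc \<longleftrightarrow> (\<exists>k. \<forall>v\<in>V. vc v = k)"

definition is_GHZ :: "'v set \<Rightarrow> 'e set \<Rightarrow> ('e \<Rightarrow> 'v) \<Rightarrow> ('e \<Rightarrow> 'v) \<Rightarrow> ('e \<Rightarrow> 'v \<Rightarrow> nat)
    \<Rightarrow> ('e \<Rightarrow> complex) \<Rightarrow> bool" where
  "is_GHZ V E end1 end2 c w \<longleftrightarrow>
     (\<forall>vc\<in>vertex_colourings V.
        (monochromatic V vc \<and> feasible V E end1 end2 c vc \<longrightarrow> vc_weight V E end1 end2 c w vc = 1) \<and>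
        (\<not> monochromatic V vc \<longrightarrow> vc_weight V E end1 end2 c w vc = 0))"

definition is_gGHZ :: "'v set \<Rightarrow> 'e set \<Rightarrow> ('e \<Rightarrow> 'v) \<Rightarrow> ('e \<Rightarrow> 'v) \<Rightarrow> ('e \<Rightarrow> 'v \<Rightarrow> nat)
    \<Rightarrow> ('e \<Rightarrow> complex) \<Rightarrow> bool" where
  "is_gGHZ V E end1 end2 c w \<longleftrightarrow>
     (\<forall>vc\<in>vertex_colourings V.
        (monochromatic V vc \<and> feasible V E end1 end2 c vc \<longrightarrow> vc_weight V E end1 end2 c w vc \<noteq> 0) \<and>
        (\<not> monochromatic V vc \<longrightarrow> vc_weight V E end1 end2 c w vc = 0))"

text \<open>Dimension: number of feasible monochromatic vertex colourings (does not depend on w,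
but we keep w as an argument to match the paper's phrasing).\<close>
definition ghz_dimension :: "'v set \<Rightarrow> 'e set \<Rightarrow> ('e \<Rightarrow> 'v) \<Rightarrow> ('e \<Rightarrow> 'v) \<Rightarrow> ('e \<Rightarrow> 'v \<Rightarrow> nat)
    \<Rightarrow> ('e \<Rightarrow> complex) \<Rightarrow> nat" where
  "ghz_dimension V E end1 end2 c w =
     card {vc \<in> vertex_colourings V. monochromatic V vc \<and> feasible V E end1 end2 c vc}"

end

theory Submission
  imports Defs
begin

lemma prod_scale:
  fixes w :: "'e \<Rightarrow> complex"
  assumes fin: "finite M"
    and ex: "\<exists>!e. e \<in> M \<and> (v0 = end1 e \<or> v0 = end2 e)"
    and col: "\<And>e. e \<in> M \<Longrightarrow> (v0 = end1 e \<or> v0 = end2 e) \<Longrightarrow> c e v0 = k"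
  shows "(\<Prod>e\<in>M. (if end1 e = v0 \<or> end2 e = v0 then w e * inverse (W (c e v0)) else w e))
         = inverse (W k) * (\<Prod>e\<in>M. w e)"
proof -
  obtain e0 where e0: "e0 \<in> M" "v0 = end1 e0 \<or> v0 = end2 e0"
    and un: "\<And>e. e \<in> M \<Longrightarrow> (v0 = end1 e \<or> v0 = end2 e) \<Longrightarrow> e = e0"
    using ex by blast
  let ?f = "\<lambda>e. (if end1 e = v0 \<or> end2 e = v0 then w e * inverse (W (c e v0)) else w e)"
  have "(\<Prod>e\<in>M. ?f e) = ?f e0 * (\<Prod>e\<in>M - {e0}. ?f e)"
    using fin e0(1) by (simp add: prod.remove)
  also have "(\<Prod>e\<in>M - {e0}. ?f e) = (\<Prod>e\<in>M - {e0}. w e)"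
    by (rule prod.cong) (use un in auto)
  also have "?f e0 = w e0 * inverse (W k)" using e0 col[OF e0] by auto
  also have "w e0 * inverse (W k) * (\<Prod>e\<in>M - {e0}. w e) = inverse (W k) * (w e0 * (\<Prod>e\<in>M - {e0}. w e))"
    by simp
  also have "w e0 * (\<Prod>e\<in>M - {e0}. w e) = (\<Prod>e\<in>M. w e)"
    using fin e0(1) by (simp add: prod.remove)
  finally show ?thesis .
qed

theorem lemma1:
  fixes V :: "'v set" and E :: "'e set" and end1 end2 :: "'e \<Rightarrow> 'v"
    and c :: "'e \<Rightarrow> 'v \<Rightarrow> nat" and w :: "'e \<Rightarrow> complex"
  assumes "multigraph V E end1 end2"
    and "is_gGHZ V E end1 end2 c w"
  shows "\<exists>w' :: 'e \<Rightarrow> complex. is_GHZ V E end1 end2 c w' \<and>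
           ghz_dimension V E end1 end2 c w' = ghz_dimension V E end1 end2 c w"
proof (cases "V = {}")
  case True
  then have Ee: "E = {}" using assms(1) unfolding multigraph_def by auto
  have "is_GHZ V E end1 end2 c w"
    unfolding is_GHZ_def vc_weight_def perfect_matchings_def filtered_edges_def monochromatic_def
    using True Ee by simp
  then show ?thesis by (auto simp: ghz_dimension_def)
next
  case False
  then obtain v0 where v0: "v0 \<in> V" by blast
  define W where "W k = vc_weight V E end1 end2 c w (\<lambda>_. k)" for k
  define w' where "w' e = (if end1 e = v0 \<or> end2 e = v0 then w e * inverse (W (c e v0)) else w e)" for e
  have finE: "finite E" and ends: "\<And>e. e \<in> E \<Longrightarrow> end1 e \<in> V \<and> end2 e \<in> V"
    using assms(1) unfolding multigraph_def by auto
  have key: "vc_weight V E end1 end2 c w' vc = inverse (W (vc v0)) * vc_weight V E end1 end2 c w vc" for vc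
  proof -
    let ?P = "perfect_matchings V (filtered_edges E end1 end2 c vc) end1 end2"
    have "vc_weight V E end1 end2 c w' vc = (\<Sum>M\<in>?P. inverse (W (vc v0)) * (\<Prod>e\<in>M. w e))"
      unfolding vc_weight_def
    proof (rule sum.cong[OF refl])
      fix M assume M: "M \<in> ?P"
      have Msub: "M \<subseteq> E" using M unfolding perfect_matchings_def filtered_edges_def by auto
      show "(\<Prod>e\<in>M. w' e) = inverse (W (vc v0)) * (\<Prod>e\<in>M. w e)"
        unfolding w'_def
      proof (rule prod_scale[where k="vc v0"])
        show "finite M" using Msub finE finite_subset by blast
        show "\<exists>!e. e \<in> M \<and> (v0 = end1 e \<or> v0 = end2 e)" using M v0 unfolding perfect_matchings_def by auto
        show "c e v0 = vc v0" if "e \<in> M" "v0 = end1 e \<or> v0 = end2 e" for e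
          using that M unfolding perfect_matchings_def filtered_edges_def by auto
      qed
    qed
    then show ?thesis by (simp add: sum_distrib_left vc_weight_def)
  qed
  have "is_GHZ V E end1 end2 c w'"
    unfolding is_GHZ_def
  proof (intro ballI conjI impI)
    fix vc assume vc: "vc \<in> vertex_colourings V"
    {
      assume nm: "\<not> monochromatic V vc"
      then show "vc_weight V E end1 end2 c w' vc = 0"
        using assms(2) vc key unfolding is_gGHZ_def by simp
    }
    {
      assume mf: "monochromatic V vc \<and> feasible V E end1 end2 c vc"
      then obtain k where k: "\<forall>v\<in>V. vc v = k" unfolding monochromatic_def by auto
      have fe: "filtered_edges E end1 end2 c vc = filtered_edges E end1 end2 c (\<lambda>_. k)"
        unfolding filtered_edges_def using k ends by auto
      have "W (vc v0) = vc_weight V E end1 end2 c w vc"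
        unfolding W_def vc_weight_def using fe k v0 by simp
      moreover have "vc_weight V E end1 end2 c w vc \<noteq> 0"
        using assms(2) vc mf unfolding is_gGHZ_def by blast
      ultimately show "vc_weight V E end1 end2 c w' vc = 1" using key by simp
    }
  qed
  then show ?thesis by (auto simp: ghz_dimension_def)
qed

end
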